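(* Let $T(x)=1+\sum_{n\ge1} t_n x^n$ be the formal power series defined in the context (the cluster generating function for the consecutive pattern $1423$), which satisfies \[T(x) = 1 + \frac{x}{1+x}\,T\!\left(\frac{x}{1+x^2}\right).\] Let $B(x)=\frac{x}{1+x^2}$, $B_0(x)=x$ and $B_j(x)=B(B_{j-1}(x))$ for $j\ge1$. Then this functional equation has the solution \[T(x) = 1 + \sum_{n=0}^\infty \prod_{j=0}^n \frac{B_j(x)}{1+B_j(x)},\] where the infinite sum converges in the ring of formal power series in $x$.
   Context: Let $\sigma=1423$, a consecutive pattern of length $m=4$. An occurrence of $\sigma$ in a permutation $\pi=\pi_1\cdots\pi_n$ is a set of $m$ consecutive positions whose entries are in the same relative order as $\sigma$. A $k$-cluster of length $n\ge m$ is a permutation $\pi$ of $\{1,\dots,n\}$ such that $\pi$ contains precisely $k$ occurrences of $\sigma$, every entry of $\pi$ belongs to at least one occurrence of $\sigma$, and any two successive occurrences of $\sigma$ overlap in at least one position. Let $s_{n,k}$ be the number of $k$-clusters of length $n$, with the additional convention $s_{1,0}=1$ (and $s_{n,k}=0$ for all other $n<m$). Set $t_n=\sum_k (-1)^k s_{n,k}$ and $T(x)=1+\sum_{n\ge1} t_n x^n$. *)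

theory Defs
  imports "HOL-Computational_Algebra.Formal_Power_Series"
begin

text \<open>Permutations of {1..n} are represented as lists (position i is 0-indexed).\<close>

definition occ1423 :: "nat list \<Rightarrow> nat set" where
  "occ1423 p = {i. i + 3 < length p \<and>
      p ! i < p ! (i+2) \<and> p ! (i+2) < p ! (i+3) \<and> p ! (i+3) < p ! (i+1)}"

definition is_cluster :: "nat \<Rightarrow> nat \<Rightarrow> nat list \<Rightarrow> bool" where
  "is_cluster n k p \<longleftrightarrow>
     length p = n \<and> distinct p \<and> set p = {1..n} \<and>
     card (occ1423 p) = k \<and>
     (\<forall>j<n. \<exists>i\<in>occ1423 p. i \<le> j \<and> j \<le> i + 3) \<and>
     (\<forall>i\<in>occ1423 p. \<forall>i'\<in>occ1423 p.
        i < i' \<and> (\<forall>l\<in>occ1423 p. \<not> (i < l \<and> l < i')) \<longrightarrow> i' \<le> i + 3)"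

definition s_clust :: "nat \<Rightarrow> nat \<Rightarrow> nat" where
  "s_clust n k = (if n = 1 then (if k = 0 then 1 else 0)
                  else if n < 4 then 0
                  else card {p. is_cluster n k p})"

text \<open>t_n = sum over k of (-1)^k s_{n,k}; s_{n,k} = 0 for k > n.\<close>
definition t_clust :: "nat \<Rightarrow> int" where
  "t_clust n = (\<Sum>k\<le>n. (-1) ^ k * int (s_clust n k))"

definition T_clust :: "rat fps" where
  "T_clust = Abs_fps (\<lambda>n. if n = 0 then 1 else of_int (t_clust n))"

definition Bfun :: "rat fps \<Rightarrow> rat fps" where
  "Bfun f = f / (1 + f ^ 2)"

fun Bj :: "nat \<Rightarrow> rat fps" where
  "Bj 0 = fps_X"
| "Bj (Suc j) = Bfun (Bj j)"

end

theory Submission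
  imports Defs
begin

unbundle fps_syntax


definition cov :: "nat list \<Rightarrow> bool" where
  "cov p \<longleftrightarrow> (\<forall>j<length p. \<exists>i\<in>occ1423 p. i \<le> j \<and> j \<le> i + 3)"
definition suc3 :: "nat list \<Rightarrow> bool" where
  "suc3 p \<longleftrightarrow> (\<forall>i\<in>occ1423 p. \<forall>i'\<in>occ1423 p.
        i < i' \<and> (\<forall>l\<in>occ1423 p. \<not> (i < l \<and> l < i')) \<longrightarrow> i' \<le> i + 3)"
definition Cl :: "nat \<Rightarrow> nat list set" where
  "Cl n = {p. length p = n \<and> distinct p \<and> set p = {1..n} \<and> cov p \<and> suc3 p}"

lemma is_cluster_iff: "is_cluster n k p \<longleftrightarrow> p \<in> Cl n \<and> card (occ1423 p) = k"
  by (auto simp: is_cluster_def Cl_def cov_def suc3_def)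

lemma occD: "i \<in> occ1423 p \<Longrightarrow> i + 3 < length p \<and> p!i < p!(i+2) \<and> p!(i+2) < p!(i+3) \<and> p!(i+3) < p!(i+1)"
  by (simp add: occ1423_def)

lemma occ_Suc: "i \<in> occ1423 p \<Longrightarrow> Suc i \<notin> occ1423 p"
  by (auto simp: occ1423_def)

lemma occ_sub: "occ1423 p \<subseteq> {..<length p}"
  by (auto simp: occ1423_def)

lemma finite_occ[simp]: "finite (occ1423 p)"
  using occ_sub finite_subset by blast

lemma occ_append: "(i + length xs \<in> occ1423 (xs @ ys)) = (i \<in> occ1423 ys)"
  by (simp add: occ1423_def nth_append add.assoc[symmetric])

lemma occ_map: "strict_mono g \<Longrightarrow> occ1423 (map g q) = occ1423 q"
  by (auto simp: occ1423_def strict_mono_less)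

lemma min_lemma:
  assumes c: "cov p" and s: "suc3 p" and so: "sa \<in> occ1423 p"
  shows "sa \<le> j \<Longrightarrow> j < length p \<Longrightarrow> p!sa \<le> p!j"
proof (induction j rule: less_induct)
  case (less j)
  show ?case
  proof (cases "j \<le> sa + 3")
    case True
    hence "j = sa \<or> j = sa+1 \<or> j = sa+2 \<or> j = sa+3" using less.prems by arith
    then show ?thesis using occD[OF so] less.prems by (elim disjE) auto
  next
    case False
    obtain i where i: "i \<in> occ1423 p" "i \<le> j" "j \<le> i + 3"
      using c less.prems unfolding cov_def by blast
    have "sa < i" using False i by auto
    show ?thesis
    proof (cases "i < j")
      case True
      have "j = i+1 \<or> j = i+2 \<or> j = i+3" using i True by arith
      hence "p!i < p!j" using occD[OF i(1)] by (elim disjE) auto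
      moreover have "p!sa \<le> p!i" using less.IH[of i] True \<open>sa < i\<close> less.prems by auto
      ultimately show ?thesis by simp
    next
      case False
      hence ij: "i = j" using i by auto
      define L where "L = {l\<in>occ1423 p. l < j}"
      have fL: "finite L" unfolding L_def by simp
      have "sa \<in> L" using so \<open>sa < i\<close> ij L_def by auto
      hence ne: "L \<noteq> {}" by auto
      define i' where "i' = Max L"
      have i'L: "i' \<in> L" using Max_in[OF fL ne] i'_def by simp
      have "sa \<le> i'" using Max_ge[OF fL \<open>sa \<in> L\<close>] i'_def by simp
      have nb: "\<forall>l\<in>occ1423 p. \<not> (i' < l \<and> l < j)"
        using Max_ge[OF fL] i'_def L_def by fastforce
      have "j \<le> i' + 3" using s i'L nb i(1) ij unfolding suc3_def L_def by auto
      moreover have "i' < j" using i'L L_def by auto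
      moreover have i'o: "i' \<in> occ1423 p" using i'L L_def by auto
      ultimately have "j = i'+1 \<or> j = i'+2 \<or> j = i'+3" by arith
      hence "p!i' < p!j" using occD[OF i'o] by (elim disjE) auto
      moreover have "p!sa \<le> p!i'" using less.IH[of i'] \<open>i' < j\<close> \<open>sa \<le> i'\<close> less.prems by auto
      ultimately show ?thesis by simp
    qed
  qed
qed

lemma cl_0: "p \<in> Cl n \<Longrightarrow> 0 < n \<Longrightarrow> 0 \<in> occ1423 p"
  unfolding Cl_def cov_def by force

lemma cl_ge4: "p \<in> Cl n \<Longrightarrow> 0 < n \<Longrightarrow> 4 \<le> n"
  using cl_0 occD by (fastforce simp: Cl_def)

lemma cl_min: "p \<in> Cl n \<Longrightarrow> j < n \<Longrightarrow> p!0 \<le> p!j"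
  using min_lemma[of p 0 j] cl_0[of p n] by (auto simp: Cl_def)

lemma cl_first: assumes "p \<in> Cl n" "0 < n" shows "p!0 = 1"
proof -
  have "1 \<in> set p" using assms by (auto simp: Cl_def)
  then obtain j where "j < n" "p!j = 1" using assms by (auto simp: Cl_def in_set_conv_nth)
  hence "p!0 \<le> 1" using cl_min[OF assms(1)] by force
  moreover have "p!0 \<in> set p" using assms by (auto simp: Cl_def)
  ultimately show ?thesis using assms by (auto simp: Cl_def)
qed

lemma cl_nth: "p \<in> Cl n \<Longrightarrow> j < n \<Longrightarrow> p!j \<in> {1..n}"
  by (auto simp: Cl_def)

lemma two_or_three:
  assumes p: "p \<in> Cl n" and n: "5 \<le> n"
  shows "(2 \<in> occ1423 p \<or> 3 \<in> occ1423 p) \<and> \<not> (2 \<in> occ1423 p \<and> 3 \<in> occ1423 p)"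
proof -
  have o0: "0 \<in> occ1423 p" using cl_0 p n by auto
  have "n - 1 < length p" using p n by (simp add: Cl_def)
  then obtain i where i: "i \<in> occ1423 p" "i \<le> n - 1" "n - 1 \<le> i + 3"
    using p unfolding Cl_def cov_def by blast
  define L where "L = {l\<in>occ1423 p. 0 < l}"
  have "0 < i" using i n by arith
  hence "i \<in> L" using i(1) L_def by simp
  hence ne: "L \<noteq> {}" by auto
  have fL: "finite L" by (simp add: L_def)
  define i' where "i' = Min L"
  have i'L: "i' \<in> L" using Min_in[OF fL ne] i'_def by simp
  have nb: "\<forall>l\<in>occ1423 p. \<not> (0 < l \<and> l < i')"
  proof (intro ballI notI)
    fix l assume "l \<in> occ1423 p" "0 < l \<and> l < i'"
    then have "l \<in> L" "l < i'" by (auto simp: L_def)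
    then show False using Min_le[OF fL, of l] i'_def by simp
  qed
  have i'o: "i' \<in> occ1423 p" "0 < i'" using i'L L_def by auto
  have sp: "suc3 p" using p by (simp add: Cl_def)
  have "i' \<le> 0 + 3" using sp[unfolded suc3_def, rule_format, of 0 i'] o0 i'o nb by blast
  hence "i' \<le> 3" by simp
  moreover have "i' \<noteq> 1" using occ_Suc[OF o0] i'o by auto
  moreover note i'o
  moreover have "i' = 2 \<or> i' = 3" using calculation by arith
  ultimately have "2 \<in> occ1423 p \<or> 3 \<in> occ1423 p" by auto
  moreover have "\<not> (2 \<in> occ1423 p \<and> 3 \<in> occ1423 p)" using occ_Suc[of 2 p] by auto
  ultimately show ?thesis by blast
qed

lemma cov_suc_down:
  assumes c: "cov (xs @ ys)" and s: "suc3 (xs @ ys)" and d: "length xs \<in> occ1423 (xs @ ys)"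
    and d3: "length xs \<le> 3"
    and low: "\<forall>l\<in>occ1423 (xs @ ys). l < length xs \<longrightarrow> l = 0"
  shows "cov ys \<and> suc3 ys"
proof -
  let ?d = "length xs"
  have o: "\<And>k. (k \<in> occ1423 ys) = (k + ?d \<in> occ1423 (xs @ ys))" using occ_append by blast
  have "0 \<in> occ1423 ys" using o[of 0] d by simp
  have cy: "cov ys" unfolding cov_def
  proof (intro allI impI)
    fix j assume j: "j < length ys"
    have "j + ?d < length (xs @ ys)" using j by simp
    then obtain i where i: "i \<in> occ1423 (xs@ys)" "i \<le> j + ?d" "j + ?d \<le> i + 3"
      using c unfolding cov_def by blast
    show "\<exists>i\<in>occ1423 ys. i \<le> j \<and> j \<le> i + 3"
    proof (cases "?d \<le> i")
      case True
      then have "i - ?d \<in> occ1423 ys" using o[of "i - ?d"] i by simp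
      then show ?thesis using i True by (intro bexI[of _ "i - ?d"]) auto
    next
      case False
      then have "i = 0" using low i by auto
      then show ?thesis using \<open>0 \<in> occ1423 ys\<close> i by (intro bexI[of _ 0]) auto
    qed
  qed
  have sy: "suc3 ys" unfolding suc3_def
  proof (intro ballI impI)
    fix k k' assume k: "k \<in> occ1423 ys" "k' \<in> occ1423 ys" and kk: "k < k' \<and> (\<forall>l\<in>occ1423 ys. \<not> (k < l \<and> l < k'))"
    have "\<forall>l\<in>occ1423 (xs@ys). \<not> (k + ?d < l \<and> l < k' + ?d)"
    proof (intro ballI notI)
      fix l assume l: "l \<in> occ1423 (xs@ys)" "k + ?d < l \<and> l < k' + ?d"
      then have "l - ?d \<in> occ1423 ys" using o[of "l - ?d"] by simp
      then show False using kk l by force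
    qed
    then show "k' \<le> k + 3" using s k o kk unfolding suc3_def by force
  qed
  show ?thesis using cy sy by simp
qed

lemma cov_suc_up:
  assumes c: "cov ys" and s: "suc3 ys" and o0: "0 \<in> occ1423 ys"
    and d3: "length xs \<le> 3" and d0: "0 < length xs"
    and occ: "occ1423 (xs @ ys) = insert 0 ((\<lambda>k. k + length xs) ` occ1423 ys)"
  shows "cov (xs @ ys) \<and> suc3 (xs @ ys)"
proof -
  let ?d = "length xs"
  have cp: "cov (xs @ ys)" unfolding cov_def
  proof (intro allI impI)
    fix j assume j: "j < length (xs @ ys)"
    show "\<exists>i\<in>occ1423 (xs@ys). i \<le> j \<and> j \<le> i + 3"
    proof (cases "j < ?d")
      case True then show ?thesis using occ d3 by (intro bexI[of _ 0]) auto
    next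
      case False
      have "j - ?d < length ys" using j False by simp
      then obtain i where "i \<in> occ1423 ys" "i \<le> j - ?d" "j - ?d \<le> i + 3"
        using c unfolding cov_def by blast
      then show ?thesis using occ False by (intro bexI[of _ "i + ?d"]) auto
    qed
  qed
  have sp: "suc3 (xs @ ys)" unfolding suc3_def
  proof (intro ballI impI)
    fix i i' assume i: "i \<in> occ1423 (xs@ys)" "i' \<in> occ1423 (xs@ys)"
      and ii: "i < i' \<and> (\<forall>l\<in>occ1423 (xs@ys). \<not> (i < l \<and> l < i'))"
    obtain k' where k': "k' \<in> occ1423 ys" "i' = k' + ?d" using i ii occ by auto
    show "i' \<le> i + 3"
    proof (cases "i = 0")
      case True
      have "?d \<in> occ1423 (xs@ys)" using occ o0 by auto
      hence "\<not> ?d < i'" using ii True d0 by auto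
      then show ?thesis using d3 by simp
    next
      case False
      then obtain k where k: "k \<in> occ1423 ys" "i = k + ?d" using i occ by auto
      have "\<forall>l\<in>occ1423 ys. \<not> (k < l \<and> l < k')"
      proof (intro ballI notI)
        fix l assume "l \<in> occ1423 ys" "k < l \<and> l < k'"
        then show False using ii occ k k' by force
      qed
      then have "k' \<le> k + 3" using s k k' ii unfolding suc3_def by auto
      then show ?thesis using k k' by simp
    qed
  qed
  show ?thesis using cp sp by simp
qed



lemma cov_map: "strict_mono g \<Longrightarrow> cov (map g q) = cov q"
  by (simp add: cov_def occ_map)
lemma suc3_map: "strict_mono g \<Longrightarrow> suc3 (map g q) = suc3 q"
  by (simp add: suc3_def occ_map)

lemma split2: "2 \<le> length p \<Longrightarrow> p = [p!0, p!1] @ drop 2 p"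
  by (cases p; cases "tl p") auto
lemma split3: "3 \<le> length p \<Longrightarrow> p = [p!0, p!1, p!2] @ drop 3 p"
  by (cases p; cases "tl p"; cases "tl (tl p)") auto

definition g2 :: "nat \<Rightarrow> nat \<Rightarrow> nat" where "g2 v u = (if u + 1 < v then u + 1 else u + 2)"
definition h2 :: "nat \<Rightarrow> nat \<Rightarrow> nat" where "h2 v u = (if u < v then u - 1 else u - 2)"
definition build2 :: "nat \<Rightarrow> nat list \<Rightarrow> nat list" where "build2 v q = [1, v] @ map (g2 v) q"

lemma sm_g2: "strict_mono (g2 v)"
  by (simp add: strict_mono_Suc_iff g2_def)

lemma occ_build2:
  assumes q: "q \<in> Cl m" "0 < m" and v: "q!1 + 2 \<le> v"
  shows "occ1423 (build2 v q) = insert 0 ((\<lambda>k. k + 2) ` occ1423 q)"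
proof (rule set_eqI)
  fix i
  have m4: "4 \<le> m" using cl_ge4 q by blast
  have lq: "length q = m" using q by (simp add: Cl_def)
  have q0: "q!0 = 1" using cl_first q by blast
  have o0: "0 \<in> occ1423 q" using cl_0 q by blast
  have q01: "q!0 < q!1" using occD[OF o0] by simp
  show "i \<in> occ1423 (build2 v q) \<longleftrightarrow> i \<in> insert 0 ((\<lambda>k. k + 2) ` occ1423 q)"
  proof (cases i)
    case 0
    have "g2 v (q!0) < g2 v (q!1)" using sm_g2 q01 by (simp add: strict_mono_less)
    moreover have "1 < g2 v (q!0)" using q0 by (simp add: g2_def)
    moreover have "g2 v (q!1) < v" using v by (simp add: g2_def)
    ultimately have "0 \<in> occ1423 (build2 v q)" using m4 lq
      by (simp add: occ1423_def build2_def nth_append numeral_eq_Suc)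
    then show ?thesis using 0 by simp
  next
    case (Suc k)
    show ?thesis
    proof (cases k)
      case 0
      have "\<not> v < g2 v (q!1)" using v by (simp add: g2_def)
      then have "1 \<notin> occ1423 (build2 v q)" using lq m4
        by (simp add: occ1423_def build2_def nth_append numeral_eq_Suc)
      then show ?thesis using Suc 0 by auto
    next
      case (Suc k')
      have "i = k' + length [1, v]" using \<open>i = Suc k\<close> Suc by simp
      then have "(i \<in> occ1423 (build2 v q)) = (k' \<in> occ1423 q)"
        unfolding build2_def using occ_append[of k' "[1,v]" "map (g2 v) q"] occ_map[OF sm_g2] by simp
      then show ?thesis using \<open>i = Suc k\<close> Suc by auto
    qed
  qed
qed

lemma build2_in:
  assumes q: "q \<in> Cl m" "0 < m" and v: "q!1 + 2 \<le> v" "v \<le> m + 2"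
  shows "build2 v q \<in> Cl (m + 2)" "card (occ1423 (build2 v q)) = Suc (card (occ1423 q))"
    "build2 v q ! 1 = v"
proof -
  have lq: "length q = m" using q by (simp add: Cl_def)
  have sq: "set q = {1..m}" and dq: "distinct q" using q by (auto simp: Cl_def)
  have o0: "0 \<in> occ1423 q" using cl_0 q by blast
  have oc: "occ1423 (build2 v q) = insert 0 ((\<lambda>k. k + 2) ` occ1423 q)" using occ_build2 q v by blast
  have q1: "q!1 \<in> {1..m}" using cl_nth[OF q(1)] cl_ge4[OF q] by simp
  have v3: "3 \<le> v" using q1 v by simp
  have d: "distinct (build2 v q)"
  proof -
    have "distinct (map (g2 v) q)" using dq sm_g2 strict_mono_imp_inj_on
      by (simp add: distinct_map inj_on_def strict_mono_eq)
    moreover have "1 \<notin> set (map (g2 v) q)" using sq by (auto simp: g2_def)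
    moreover have "v \<notin> set (map (g2 v) q)" by (auto simp: g2_def)
    ultimately show ?thesis using v3 by (simp add: build2_def)
  qed
  have s: "set (build2 v q) = {1..m+2}"
  proof
    show "set (build2 v q) \<subseteq> {1..m+2}" using sq v v3 by (auto simp: build2_def g2_def)
    show "{1..m+2} \<subseteq> set (build2 v q)"
    proof
      fix x assume x: "x \<in> {1..m+2}"
      show "x \<in> set (build2 v q)"
      proof (cases "x = 1 \<or> x = v")
        case True then show ?thesis by (auto simp: build2_def)
      next
        case False
        show ?thesis
        proof (cases "x < v")
          case True
          then have "x - 1 \<in> set q" "g2 v (x - 1) = x" using x False v sq by (auto simp: g2_def)
          then show ?thesis unfolding build2_def by (metis imageI set_map UnCI set_append)
        next
          case F2: False
          then have "x - 2 \<in> set q" "g2 v (x - 2) = x" using x False v v3 sq by (auto simp: g2_def)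
          then show ?thesis unfolding build2_def by (metis imageI set_map UnCI set_append)
        qed
      qed
    qed
  qed
  have cs: "cov (build2 v q) \<and> suc3 (build2 v q)"
    using cov_suc_up[of "map (g2 v) q" "[1, v]"] q o0 oc
    by (simp add: cov_map suc3_map sm_g2 occ_map build2_def Cl_def)
  show "build2 v q \<in> Cl (m + 2)" using d s cs lq by (simp add: Cl_def build2_def)
  show "card (occ1423 (build2 v q)) = Suc (card (occ1423 q))"
    unfolding oc by (subst card_insert_disjoint) (auto simp: card_image inj_on_def)
  show "build2 v q ! 1 = v" by (simp add: build2_def)
qed

lemma unbuild2:
  assumes p: "p \<in> Cl n" and o2: "2 \<in> occ1423 p"
  shows "map (h2 (p!1)) (drop 2 p) \<in> Cl (n-2)" "map (h2 (p!1)) (drop 2 p) ! 1 + 2 \<le> p!1"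
    "p!1 \<le> n" "build2 (p!1) (map (h2 (p!1)) (drop 2 p)) = p"
proof -
  define v where "v = p!1"
  define r where "r = drop 2 p"
  define q where "q = map (h2 v) r"
  have lp: "length p = n" and dp: "distinct p" and sp: "set p = {1..n}" using p by (auto simp: Cl_def)
  have n6: "6 \<le> n" using occD[OF o2] lp by simp
  have p0: "p!0 = 1" using cl_first p n6 by simp
  have pe: "p = [1, v] @ r" using split2[of p] lp n6 p0 v_def r_def by simp
  have o0: "0 \<in> occ1423 p" using cl_0 p n6 by simp
  have vn: "v \<in> {1..n}" using cl_nth[OF p, of 1] n6 v_def by simp
  have sr: "set r = {1..n} - {1, v}" using pe dp sp by auto
  have v2: "2 \<le> v" using p0 vn dp pe by auto
  have gh: "\<forall>u\<in>set r. g2 v (h2 v u) = u"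
  proof
    fix u assume "u \<in> set r"
    then have "2 \<le> u" "u \<noteq> v" using sr by auto
    then show "g2 v (h2 v u) = u" using v2 unfolding g2_def h2_def by auto
  qed
  have mr: "map (g2 v) q = r" unfolding q_def by (simp add: map_idI gh)
  have b: "build2 v q = p" using pe mr by (simp add: build2_def)
  have lq: "length q = n - 2" using lp by (simp add: q_def r_def)
  have "distinct r" unfolding r_def using dp by simp
  then have "distinct (map (g2 v) q)" using mr by simp
  then have dq: "distinct q" by (simp add: distinct_map)
  have sq: "set q = {1..n-2}"
  proof
    show "set q \<subseteq> {1..n-2}"
    proof
      fix x assume "x \<in> set q"
      then obtain u where u: "u \<in> set r" "x = h2 v u" by (auto simp: q_def)
      then have "2 \<le> u" "u \<le> n" "u \<noteq> v" using sr by auto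
      then show "x \<in> {1..n-2}" using u(2) vn v2 unfolding h2_def by auto
    qed
    show "{1..n-2} \<subseteq> set q"
    proof
      fix k assume k: "k \<in> {1..n-2}"
      have k1: "1 \<le> k" "k \<le> n - 2" using k by auto
      have "g2 v k \<in> {1..n} - {1, v}" using k1 vn unfolding g2_def by auto
      then have "g2 v k \<in> set r" using sr by simp
      moreover have "h2 v (g2 v k) = k" using k1 unfolding g2_def h2_def by simp
      ultimately show "k \<in> set q" unfolding q_def by (metis image_eqI set_map)
    qed
  qed
  have low: "\<forall>l\<in>occ1423 p. l < 2 \<longrightarrow> l = 0"
    using occ_Suc[OF o0] by (auto simp: less_Suc_eq numeral_2_eq_2)
  have e: "[1,v] @ map (g2 v) q = p" using pe mr by simp
  have l2: "length [1::nat, v] = 2" by simp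
  have cpp: "cov p" "suc3 p" using p by (auto simp: Cl_def)
  have cs: "cov (map (g2 v) q) \<and> suc3 (map (g2 v) q)"
    using cov_suc_down[of "[1,v]" "map (g2 v) q", unfolded e l2, OF cpp o2 _ low] by simp
  have cq: "cov q \<and> suc3 q" using cs by (simp add: cov_map suc3_map sm_g2)
  show "map (h2 (p!1)) (drop 2 p) \<in> Cl (n-2)" using cq lq dq sq by (simp add: Cl_def q_def v_def r_def)
  have "p!3 < p!1" using occD[OF o0] by simp
  moreover have "p!3 = r!1" using lp n6 by (simp add: r_def)
  moreover have "r!1 = map (g2 v) q ! 1" using mr by simp
  moreover have "map (g2 v) q ! 1 = g2 v (q!1)" using lq n6 by simp
  ultimately have "g2 v (q!1) < v" using v_def by simp
  then show "map (h2 (p!1)) (drop 2 p) ! 1 + 2 \<le> p!1"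
    by (simp add: g2_def q_def v_def r_def split: if_splits)
  show "p!1 \<le> n" using vn v_def by simp
  show "build2 (p!1) (map (h2 (p!1)) (drop 2 p)) = p" using b by (simp add: q_def v_def r_def)
qed



definition g3 :: "nat \<Rightarrow> nat \<Rightarrow> nat" where "g3 v u = (if u + 2 < v then u + 2 else u + 3)"
definition h3 :: "nat \<Rightarrow> nat \<Rightarrow> nat" where "h3 v u = (if u < v then u - 2 else u - 3)"
definition build3 :: "nat \<Rightarrow> nat list \<Rightarrow> nat list" where "build3 v q = [1, v, 2] @ map (g3 v) q"

lemma sm_g3: "strict_mono (g3 v)"
  by (simp add: strict_mono_Suc_iff g3_def)

lemma occ_build3:
  assumes q: "q \<in> Cl m" "0 < m" and v: "4 \<le> v"
  shows "occ1423 (build3 v q) = insert 0 ((\<lambda>k. k + 3) ` occ1423 q)"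
proof (rule set_eqI)
  fix i
  have m4: "4 \<le> m" using cl_ge4 q by blast
  have lq: "length q = m" using q by (simp add: Cl_def)
  have q0: "q!0 = 1" using cl_first q by blast
  have g0: "g3 v (q!0) = 3" using q0 v by (simp add: g3_def)
  have q2: "1 \<le> q!2" using cl_nth[OF q(1), of 2] m4 by simp
  have g2': "3 \<le> g3 v (q!2)" using q2 by (simp add: g3_def)
  show "i \<in> occ1423 (build3 v q) \<longleftrightarrow> i \<in> insert 0 ((\<lambda>k. k + 3) ` occ1423 q)"
  proof (cases "i \<le> 2")
    case True
    then have "i = 0 \<or> i = 1 \<or> i = 2" by arith
    moreover have "0 \<in> occ1423 (build3 v q)" using m4 lq g0 v
      by (simp add: occ1423_def build3_def nth_append numeral_eq_Suc)
    moreover have "1 \<notin> occ1423 (build3 v q)" using m4 lq g0 v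
      by (simp add: occ1423_def build3_def nth_append numeral_eq_Suc)
    moreover have "2 \<notin> occ1423 (build3 v q)" using m4 lq g0 g2'
      by (simp add: occ1423_def build3_def nth_append numeral_eq_Suc)
    ultimately show ?thesis by auto
  next
    case False
    then have "i = (i - 3) + length [1, v, 2]" by simp
    then have "(i \<in> occ1423 (build3 v q)) = (i - 3 \<in> occ1423 q)"
      unfolding build3_def using occ_append[of "i-3" "[1,v,2]" "map (g3 v) q"] occ_map[OF sm_g3] by simp
    then show ?thesis using False by force
  qed
qed

lemma build3_in:
  assumes q: "q \<in> Cl m" "0 < m" and v: "4 \<le> v" "v \<le> m + 3"
  shows "build3 v q \<in> Cl (m + 3)" "card (occ1423 (build3 v q)) = Suc (card (occ1423 q))"
    "build3 v q ! 1 = v"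
proof -
  have lq: "length q = m" using q by (simp add: Cl_def)
  have sq: "set q = {1..m}" and dq: "distinct q" using q by (auto simp: Cl_def)
  have o0: "0 \<in> occ1423 q" using cl_0 q by blast
  have oc: "occ1423 (build3 v q) = insert 0 ((\<lambda>k. k + 3) ` occ1423 q)" using occ_build3 q v by blast
  have d: "distinct (build3 v q)"
  proof -
    have "distinct (map (g3 v) q)" using dq sm_g3 strict_mono_imp_inj_on
      by (simp add: distinct_map inj_on_def strict_mono_eq)
    moreover have "1 \<notin> set (map (g3 v) q)" using sq by (auto simp: g3_def)
    moreover have "2 \<notin> set (map (g3 v) q)" using sq by (auto simp: g3_def)
    moreover have "v \<notin> set (map (g3 v) q)" by (auto simp: g3_def)
    ultimately show ?thesis using v by (simp add: build3_def)
  qed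
  have s: "set (build3 v q) = {1..m+3}"
  proof
    show "set (build3 v q) \<subseteq> {1..m+3}"
    proof
      fix x assume "x \<in> set (build3 v q)"
      then have "x = 1 \<or> x = v \<or> x = 2 \<or> (\<exists>u\<in>set q. x = g3 v u)" by (auto simp: build3_def)
      then show "x \<in> {1..m+3}" using sq v unfolding g3_def by auto
    qed
    show "{1..m+3} \<subseteq> set (build3 v q)"
    proof
      fix x assume x: "x \<in> {1..m+3}"
      show "x \<in> set (build3 v q)"
      proof (cases "x = 1 \<or> x = v \<or> x = 2")
        case True then show ?thesis by (auto simp: build3_def)
      next
        case False
        show ?thesis
        proof (cases "x < v")
          case True
          then have "x - 2 \<in> set q" "g3 v (x - 2) = x" using x False v sq by (auto simp: g3_def)
          then show ?thesis unfolding build3_def by (metis imageI set_map UnCI set_append)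
        next
          case F2: False
          then have "x - 3 \<in> set q" "g3 v (x - 3) = x" using x False v sq by (auto simp: g3_def)
          then show ?thesis unfolding build3_def by (metis imageI set_map UnCI set_append)
        qed
      qed
    qed
  qed
  have cm: "cov (map (g3 v) q)" "suc3 (map (g3 v) q)" "0 \<in> occ1423 (map (g3 v) q)"
    using q o0 by (simp_all add: cov_map suc3_map sm_g3 occ_map Cl_def)
  have oc': "occ1423 ([1,v,2] @ map (g3 v) q) = insert 0 ((\<lambda>k. k+3) ` occ1423 (map (g3 v) q))"
    unfolding occ_map[OF sm_g3] using oc by (simp only: build3_def)
  have l3: "length [1::nat,v,2] = 3" by simp
  have cs: "cov (build3 v q) \<and> suc3 (build3 v q)"
    unfolding build3_def
    using cov_suc_up[of "map (g3 v) q" "[1, v, 2]", unfolded l3, OF cm _ _ oc'] by simp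
  show "build3 v q \<in> Cl (m + 3)" using d s cs lq by (simp add: Cl_def build3_def)
  show "card (occ1423 (build3 v q)) = Suc (card (occ1423 q))"
    unfolding oc by (subst card_insert_disjoint) (auto simp: card_image inj_on_def)
  show "build3 v q ! 1 = v" by (simp add: build3_def)
qed

lemma unbuild3:
  assumes p: "p \<in> Cl n" and o3: "3 \<in> occ1423 p"
  shows "map (h3 (p!1)) (drop 3 p) \<in> Cl (n-3)" "4 \<le> p!1"
    "p!1 \<le> n" "build3 (p!1) (map (h3 (p!1)) (drop 3 p)) = p"
proof -
  define v where "v = p!1"
  define r where "r = drop 3 p"
  define q where "q = map (h3 v) r"
  have lp: "length p = n" and dp: "distinct p" and sp: "set p = {1..n}" using p by (auto simp: Cl_def)
  have cpp: "cov p" "suc3 p" using p by (auto simp: Cl_def)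
  have n7: "7 \<le> n" using occD[OF o3] lp by simp
  have p0: "p!0 = 1" using cl_first p n7 by simp
  have o0: "0 \<in> occ1423 p" using cl_0 p n7 by simp
  have ord: "p!0 < p!2" "p!2 < p!3" "p!3 < p!1" using occD[OF o0] by (auto simp: numeral_2_eq_2)
  have p2: "p!2 = 2"
  proof -
    have "2 \<in> set p" using sp n7 by simp
    then obtain j where j: "j < n" "p!j = 2" using lp by (auto simp: in_set_conv_nth)
    have "j = 2"
    proof (rule ccontr)
      assume "j \<noteq> 2"
      moreover have "j \<noteq> 0" proof assume "j = 0" then show False using j p0 by simp qed
      moreover have "j \<noteq> 1" using j ord p0 by auto
      ultimately have "3 \<le> j" by arith
      then have "p!3 \<le> p!j" using min_lemma[OF cpp o3, of j] j lp by simp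
      then show False using j ord p0 by simp
    qed
    then show ?thesis using j by simp
  qed
  have v4: "4 \<le> v" using ord p2 v_def by simp
  have pe: "p = [1, v, 2] @ r" using split3[of p] lp n7 p0 p2 v_def r_def by simp
  have vn: "v \<in> {1..n}" using cl_nth[OF p, of 1] n7 v_def by simp
  have sr: "set r = {1..n} - {1, 2, v}" using pe dp sp by auto
  have gh: "\<forall>u\<in>set r. g3 v (h3 v u) = u"
  proof
    fix u assume "u \<in> set r"
    then have "3 \<le> u" "u \<noteq> v" using sr by auto
    then show "g3 v (h3 v u) = u" using v4 unfolding g3_def h3_def by auto
  qed
  have mr: "map (g3 v) q = r" unfolding q_def by (simp add: map_idI gh)
  have b: "build3 v q = p" using pe mr by (simp add: build3_def)
  have lq: "length q = n - 3" using lp by (simp add: q_def r_def)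
  have "distinct r" unfolding r_def using dp by simp
  then have "distinct (map (g3 v) q)" using mr by simp
  then have dq: "distinct q" by (simp add: distinct_map)
  have sq: "set q = {1..n-3}"
  proof
    show "set q \<subseteq> {1..n-3}"
    proof
      fix x assume "x \<in> set q"
      then obtain u where u: "u \<in> set r" "x = h3 v u" by (auto simp: q_def)
      then have "3 \<le> u" "u \<le> n" "u \<noteq> v" using sr by auto
      then show "x \<in> {1..n-3}" using u(2) vn v4 unfolding h3_def by auto
    qed
    show "{1..n-3} \<subseteq> set q"
    proof
      fix k assume k: "k \<in> {1..n-3}"
      have k1: "1 \<le> k" "k \<le> n - 3" using k by auto
      have "g3 v k \<in> {1..n} - {1, 2, v}" using k1 vn unfolding g3_def by auto
      then have "g3 v k \<in> set r" using sr by simp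
      moreover have "h3 v (g3 v k) = k" using k1 unfolding g3_def h3_def by simp
      ultimately show "k \<in> set q" unfolding q_def by (metis image_eqI set_map)
    qed
  qed
  have o1: "1 \<notin> occ1423 p" using occ_Suc[OF o0] by simp
  have o2: "2 \<notin> occ1423 p" using occ_Suc[of 2 p] o3 by auto
  have low: "\<forall>l\<in>occ1423 p. l < 3 \<longrightarrow> l = 0"
  proof (intro ballI impI)
    fix l assume "l \<in> occ1423 p" "l < 3"
    then show "l = 0" using o1 o2 by (cases "l = 0"; cases "l = 1"; cases "l = 2") auto
  qed
  have e: "[1,v,2] @ map (g3 v) q = p" using pe mr by simp
  have l3: "length [1::nat, v, 2] = 3" by simp
  have cs: "cov (map (g3 v) q) \<and> suc3 (map (g3 v) q)"
    using cov_suc_down[of "[1,v,2]" "map (g3 v) q", unfolded e l3, OF cpp o3 _ low] by simp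
  have cq: "cov q \<and> suc3 q" using cs by (simp add: cov_map suc3_map sm_g3)
  show "map (h3 (p!1)) (drop 3 p) \<in> Cl (n-3)" using cq lq dq sq by (simp add: Cl_def q_def v_def r_def)
  show "4 \<le> p!1" using v4 v_def by simp
  show "p!1 \<le> n" using vn v_def by simp
  show "build3 (p!1) (map (h3 (p!1)) (drop 3 p)) = p" using b by (simp add: q_def v_def r_def)
qed



definition sgnc :: "nat list \<Rightarrow> int" where "sgnc p = (-1) ^ card (occ1423 p)"
definition S :: "nat \<Rightarrow> int" where "S n = (\<Sum>p\<in>Cl n. sgnc p)"

lemma finite_Cl[simp]: "finite (Cl n)"
proof -
  have "Cl n \<subseteq> {xs. set xs \<subseteq> {1..n} \<and> length xs = n}" by (auto simp: Cl_def)
  then show ?thesis using finite_lists_length_eq[of "{1..n}" n] finite_subset by blast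
qed

lemma inj_build2: "inj_on (\<lambda>(q, v). build2 v q) A"
proof (rule inj_onI, clarify)
  fix q v q' v' assume e: "build2 v q = build2 v' q'"
  then have "v = v'" by (simp add: build2_def)
  moreover from e have "map (g2 v) q = map (g2 v) q'" using \<open>v = v'\<close> by (simp add: build2_def)
  then have "q = q'" using strict_mono_imp_inj_on[OF sm_g2] by (simp add: inj_map_eq_map)
  ultimately show "q = q' \<and> v = v'" by simp
qed

lemma inj_build3: "inj_on (\<lambda>(q, v). build3 v q) A"
proof (rule inj_onI, clarify)
  fix q v q' v' assume e: "build3 v q = build3 v' q'"
  then have "v = v'" by (simp add: build3_def)
  moreover from e have "map (g3 v) q = map (g3 v) q'" using \<open>v = v'\<close> by (simp add: build3_def)
  then have "q = q'" using strict_mono_imp_inj_on[OF sm_g3] by (simp add: inj_map_eq_map)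
  ultimately show "q = q' \<and> v = v'" by simp
qed

lemma sgn_build2: "q \<in> Cl m \<Longrightarrow> 0 < m \<Longrightarrow> q!1 + 2 \<le> v \<Longrightarrow> v \<le> m + 2 \<Longrightarrow> sgnc (build2 v q) = - sgnc q"
  using build2_in(2)[of q m v] by (simp add: sgnc_def)

lemma sgn_build3: "q \<in> Cl m \<Longrightarrow> 0 < m \<Longrightarrow> 4 \<le> v \<Longrightarrow> v \<le> m + 3 \<Longrightarrow> sgnc (build3 v q) = - sgnc q"
  using build3_in(2)[of q m v] by (simp add: sgnc_def)

lemma rec_sum:
  fixes F :: "nat \<Rightarrow> 'a::comm_ring_1"
  assumes n: "5 \<le> n"
  shows "(\<Sum>p\<in>Cl n. of_int (sgnc p) * F (p!1)) =
     - (\<Sum>q\<in>Cl (n-2). of_int (sgnc q) * (\<Sum>v\<in>{q!1+2..n}. F v))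
     - of_int (S (n-3)) * (\<Sum>v\<in>{4..n}. F v)"
proof -
  define D2 where "D2 = {p\<in>Cl n. 2 \<in> occ1423 p}"
  define D3 where "D3 = {p\<in>Cl n. 3 \<in> occ1423 p}"
  define X2 where "X2 = (SIGMA q:Cl (n-2). {q!1+2..n})"
  define X3 where "X3 = Cl (n-3) \<times> {4..n}"
  have un: "Cl n = D2 \<union> D3" using two_or_three[OF _ n] by (auto simp: D2_def D3_def)
  have dis: "D2 \<inter> D3 = {}" using two_or_three[OF _ n] by (auto simp: D2_def D3_def)
  have i2: "D2 = (\<lambda>(q, v). build2 v q) ` X2"
  proof
    show "D2 \<subseteq> (\<lambda>(q, v). build2 v q) ` X2"
    proof
      fix p assume p: "p \<in> D2"
      then have pc: "p \<in> Cl n" "2 \<in> occ1423 p" by (auto simp: D2_def)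
      show "p \<in> (\<lambda>(q, v). build2 v q) ` X2"
        using unbuild2[OF pc] by (intro image_eqI[of _ _ "(map (h2 (p!1)) (drop 2 p), p!1)"]) (auto simp: X2_def)
    qed
    show "(\<lambda>(q, v). build2 v q) ` X2 \<subseteq> D2"
    proof clarify
      fix q v assume "(q, v) \<in> X2"
      then have q: "q \<in> Cl (n-2)" "q!1 + 2 \<le> v" "v \<le> n - 2 + 2" using n by (auto simp: X2_def)
      have "0 < n - 2" using n by simp
      note b = build2_in[OF q(1) this q(2,3)] occ_build2[OF q(1) this q(2)]
      have "0 \<in> occ1423 q" using cl_0 q(1) \<open>0 < n - 2\<close> by blast
      moreover have "n - 2 + 2 = n" using n by simp
      ultimately show "build2 v q \<in> D2" using b(1)[unfolded \<open>n - 2 + 2 = n\<close>] b(2-) by (auto simp: D2_def)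
    qed
  qed
  have i3: "D3 = (\<lambda>(q, v). build3 v q) ` X3"
  proof
    show "D3 \<subseteq> (\<lambda>(q, v). build3 v q) ` X3"
    proof
      fix p assume p: "p \<in> D3"
      then have pc: "p \<in> Cl n" "3 \<in> occ1423 p" by (auto simp: D3_def)
      show "p \<in> (\<lambda>(q, v). build3 v q) ` X3"
        using unbuild3[OF pc] by (intro image_eqI[of _ _ "(map (h3 (p!1)) (drop 3 p), p!1)"]) (auto simp: X3_def)
    qed
    show "(\<lambda>(q, v). build3 v q) ` X3 \<subseteq> D3"
    proof clarify
      fix q v assume "(q, v) \<in> X3"
      then have q: "q \<in> Cl (n-3)" "4 \<le> v" "v \<le> n - 3 + 3" using n by (auto simp: X3_def)
      have "0 < n - 3" using n by simp
      note b = build3_in[OF q(1) this q(2,3)] occ_build3[OF q(1) this q(2)]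
      have "0 \<in> occ1423 q" using cl_0 q(1) \<open>0 < n - 3\<close> by blast
      moreover have "n - 3 + 3 = n" using n by simp
      ultimately show "build3 v q \<in> D3" using b(1)[unfolded \<open>n - 3 + 3 = n\<close>] b(2-) by (auto simp: D3_def)
    qed
  qed
  let ?f = "\<lambda>p. of_int (sgnc p) * F (p!1) :: 'a"
  have fD: "finite D2" "finite D3" by (auto simp: D2_def D3_def)
  have "(\<Sum>p\<in>Cl n. ?f p) = (\<Sum>p\<in>D2. ?f p) + (\<Sum>p\<in>D3. ?f p)"
    unfolding un using sum.union_disjoint[OF fD dis] by simp
  moreover have "(\<Sum>p\<in>D2. ?f p) = - (\<Sum>q\<in>Cl (n-2). of_int (sgnc q) * (\<Sum>v\<in>{q!1+2..n}. F v))"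
  proof -
    have "(\<Sum>p\<in>D2. ?f p) = (\<Sum>x\<in>X2. ?f ((\<lambda>(q, v). build2 v q) x))"
      unfolding i2 by (simp only: sum.reindex[OF inj_build2] o_def)
    also have "\<dots> = (\<Sum>x\<in>X2. (case x of (q, v) \<Rightarrow> - of_int (sgnc q) * F v))"
    proof (rule sum.cong[OF refl], clarify)
      fix q v assume "(q, v) \<in> X2"
      then have q: "q \<in> Cl (n-2)" "q!1 + 2 \<le> v" "v \<le> n - 2 + 2" using n by (auto simp: X2_def)
      have "0 < n - 2" using n by simp
      note b = build2_in[OF q(1) this q(2,3)] sgn_build2[OF q(1) this q(2,3)]
      then show "?f (build2 v q) = - of_int (sgnc q) * F v" by simp
    qed
    also have "\<dots> = (\<Sum>q\<in>Cl (n-2). \<Sum>v\<in>{q!1+2..n}. - of_int (sgnc q) * F v)"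
      unfolding X2_def by (rule sum.Sigma[symmetric]) auto
    also have "\<dots> = - (\<Sum>q\<in>Cl (n-2). of_int (sgnc q) * (\<Sum>v\<in>{q!1+2..n}. F v))"
      by (simp add: sum_distrib_left sum_negf)
    finally show ?thesis .
  qed
  moreover have "(\<Sum>p\<in>D3. ?f p) = - of_int (S (n-3)) * (\<Sum>v\<in>{4..n}. F v)"
  proof -
    have "(\<Sum>p\<in>D3. ?f p) = (\<Sum>x\<in>X3. ?f ((\<lambda>(q, v). build3 v q) x))"
      unfolding i3 by (simp only: sum.reindex[OF inj_build3] o_def)
    also have "\<dots> = (\<Sum>x\<in>X3. (case x of (q, v) \<Rightarrow> - of_int (sgnc q) * F v))"
    proof (rule sum.cong[OF refl], clarify)
      fix q v assume "(q, v) \<in> X3"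
      then have q: "q \<in> Cl (n-3)" "4 \<le> v" "v \<le> n - 3 + 3" using n by (auto simp: X3_def)
      have "0 < n - 3" using n by simp
      note b = build3_in[OF q(1) this q(2,3)] sgn_build3[OF q(1) this q(2,3)]
      then show "?f (build3 v q) = - of_int (sgnc q) * F v" by simp
    qed
    also have "\<dots> = (\<Sum>q\<in>Cl (n-3). \<Sum>v\<in>{4..n}. - of_int (sgnc q) * F v)"
      unfolding X3_def by (rule sum.Sigma[symmetric]) auto
    also have "\<dots> = - of_int (S (n-3)) * (\<Sum>v\<in>{4..n}. F v)"
      by (simp add: S_def sum_distrib_left sum_distrib_right sum_negf of_int_sum, rule sum.swap)
    finally show ?thesis .
  qed
  ultimately show ?thesis by simp
qed



lemma Cl_small: "n \<noteq> 0 \<Longrightarrow> n < 4 \<Longrightarrow> Cl n = {}"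
  using cl_ge4 by fastforce

lemma Cl0: "Cl 0 = {[]}"
  by (auto simp: Cl_def cov_def suc3_def occ1423_def)

lemma occ4: "occ1423 [1,4,2,3] = {0}"
  by (auto simp: occ1423_def)
lemma occ4': "occ1423 [Suc 0,4,2,3] = {0}"
  using occ4 by simp

lemma Cl4: "Cl 4 = {[1,4,2,3]}"
proof
  show "Cl 4 \<subseteq> {[1,4,2,3]}"
  proof
    fix p assume p: "p \<in> Cl 4"
    have o0: "0 \<in> occ1423 p" using cl_0 p by simp
    have lp: "length p = 4" using p by (simp add: Cl_def)
    have r: "p!0 \<in> {1..4}" "p!1 \<in> {1..4}" "p!2 \<in> {1..4}" "p!3 \<in> {1..4}"
      using cl_nth[OF p] by auto
    have o: "p!0 < p!2" "p!2 < p!3" "p!3 < p!1" using occD[OF o0] by (auto simp: numeral_2_eq_2)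
    have v: "p!0 = 1" "p!2 = 2" "p!3 = 3" "p!1 = 4" using r o by auto
    have "p = [p!0, p!1, p!2, p!3]" using lp
      by (cases p; cases "tl p"; cases "tl (tl p)"; cases "tl (tl (tl p))") auto
    then show "p \<in> {[1,4,2,3]}" using v by simp
  qed
  show "{[1,4,2,3]} \<subseteq> Cl 4"
    by (auto simp: Cl_def cov_def suc3_def occ4')
qed

lemma S_small: "n \<noteq> 0 \<Longrightarrow> n < 4 \<Longrightarrow> S n = 0"
  by (simp add: S_def Cl_small)

lemma S0: "S 0 = 1" by (simp add: S_def Cl0 sgnc_def occ1423_def)
lemma S4: "S 4 = -1" by (simp add: S_def Cl4 sgnc_def occ4')

lemma t_S: assumes "4 \<le> n" shows "t_clust n = S n"
proof -
  have e: "{p. is_cluster n k p} = {p\<in>Cl n. card (occ1423 p) = k}" for k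
    by (auto simp: is_cluster_iff)
  have "t_clust n = (\<Sum>k\<le>n. \<Sum>p\<in>{p\<in>Cl n. card (occ1423 p) = k}. sgnc p)"
    using assms unfolding t_clust_def s_clust_def e
    by (intro sum.cong refl) (auto simp: sgnc_def)
  also have "\<dots> = S n" unfolding S_def
  proof (rule sum.group)
    show "(\<lambda>p. card (occ1423 p)) ` Cl n \<subseteq> {..n}"
    proof (rule image_subsetI)
      fix p assume "p \<in> Cl n"
      then have "card (occ1423 p) \<le> card {..<length p}" "length p = n"
        using card_mono[OF finite_lessThan occ_sub] by (auto simp: Cl_def)
      then show "card (occ1423 p) \<in> {..n}" by simp
    qed
  qed auto
  finally show ?thesis .
qed




definition w :: "rat fps" where "w = inverse (1 + fps_X^2)"
definition Bx :: "rat fps" where "Bx = fps_X * w"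
definition P :: "nat \<Rightarrow> rat fps" where
  "P n = (\<Sum>p\<in>Cl n. of_int (sgnc p) * w ^ (n - p!1))"
definition R :: "nat \<Rightarrow> rat fps" where "R n = fps_X ^ n * P n"
definition Gp :: "rat fps" where "Gp = Abs_fps (\<lambda>m. if m = 0 then 0 else of_int (S m))"

lemma w_eq: "w * (1 + fps_X^2) = 1"
  unfolding w_def by (rule inverse_mult_eq_1) simp

lemma one_minus_w: "1 - w = fps_X^2 * w"
  using w_eq by (simp add: algebra_simps)

lemma geo:
  fixes x :: "'a::comm_ring_1"
  assumes "a \<le> n + 1"
  shows "(1 - x) * (\<Sum>v\<in>{a..n}. x ^ (n - v)) = 1 - x ^ (n + 1 - a)"
proof -
  have "(\<Sum>v\<in>{a..n}. x ^ (n - v)) = (\<Sum>i<n + 1 - a. x ^ i)"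
    by (rule sum.reindex_bij_witness[of _ "\<lambda>i. n - i" "\<lambda>v. n - v"]) (use assms in auto)
  then show ?thesis by (simp add: one_diff_power_eq)
qed

lemma P_rec:
  assumes n: "5 \<le> n"
  shows "(1 - w) * P n = - (of_int (S (n-2)) - w * P (n-2)) - of_int (S (n-3)) * (1 - w ^ (n-3))"
proof -
  define A where "A = (\<Sum>q\<in>Cl (n-2). of_int (sgnc q) * (\<Sum>v\<in>{q!1+2..n}. w ^ (n - v)))"
  define Bs where "Bs = (\<Sum>v\<in>{4..n}. w ^ (n - v))"
  have Peq: "P n = - A - of_int (S (n-3)) * Bs"
    unfolding P_def A_def Bs_def by (rule rec_sum[OF n])
  have "(1 - w) * P n = - ((1 - w) * A) - of_int (S (n-3)) * ((1 - w) * Bs)"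
    unfolding Peq by (simp add: algebra_simps)
  also have "(1 - w) * A = (\<Sum>q\<in>Cl (n-2). of_int (sgnc q) * ((1 - w) * (\<Sum>v\<in>{q!1+2..n}. w ^ (n - v))))"
    unfolding A_def sum_distrib_left by (simp add: mult.left_commute)
  finally have "(1 - w) * P n = - (\<Sum>q\<in>Cl (n-2). of_int (sgnc q) * ((1 - w) * (\<Sum>v\<in>{q!1+2..n}. w ^ (n - v))))
     - of_int (S (n-3)) * ((1 - w) * (\<Sum>v\<in>{4..n}. w ^ (n - v)))" unfolding Bs_def .
  also have "\<dots> = - (\<Sum>q\<in>Cl (n-2). of_int (sgnc q) * (1 - w * w ^ (n - 2 - q!1)))
     - of_int (S (n-3)) * (1 - w ^ (n - 3))"
  proof -
    have "(\<Sum>q\<in>Cl (n-2). of_int (sgnc q) * ((1 - w) * (\<Sum>v\<in>{q!1+2..n}. w ^ (n - v)))) =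
          (\<Sum>q\<in>Cl (n-2). of_int (sgnc q) * (1 - w * w ^ (n - 2 - q!1)))"
    proof (rule sum.cong[OF refl])
      fix q assume q: "q \<in> Cl (n-2)"
      have "q!1 \<in> {1..n-2}" using cl_nth[OF q, of 1] cl_ge4[OF q] n by simp
      then have "(1 - w) * (\<Sum>v\<in>{q!1+2..n}. w ^ (n - v)) = 1 - w ^ (n + 1 - (q!1+2))"
        using n by (intro geo) auto
      also have "n + 1 - (q!1+2) = Suc (n - 2 - q!1)" using \<open>q!1 \<in> {1..n-2}\<close> n by auto
      finally show "of_int (sgnc q) * ((1 - w) * (\<Sum>v\<in>{q!1+2..n}. w ^ (n - v))) =
          of_int (sgnc q) * (1 - w * w ^ (n - 2 - q!1))" by simp
    qed
    moreover have "(1 - w) * (\<Sum>v\<in>{4..n}. w ^ (n - v)) = 1 - w ^ (n - 3)"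
      using geo[of 4 n w] n by simp
    ultimately show ?thesis by simp
  qed
  also have "(\<Sum>q\<in>Cl (n-2). of_int (sgnc q) * (1 - w * w ^ (n - 2 - q!1))) = of_int (S (n-2)) - w * P (n-2)"
    by (simp add: P_def S_def right_diff_distrib sum_subtractf sum_distrib_left of_int_sum mult.left_commute)
  finally show ?thesis .
qed

definition c :: "nat \<Rightarrow> rat" where "c m = Gp $ m"

lemma c_S: "0 < m \<Longrightarrow> fps_const (c m) = of_int (S m)"
  by (simp add: c_def Gp_def fps_of_int)

lemma R_rec:
  assumes n: "5 \<le> n"
  shows "w * R n = - fps_const (c (n-2)) * fps_X^(n-2) + w * R (n-2)
           - fps_X * (fps_const (c (n-3)) * (fps_X^(n-3) - Bx^(n-3)))"
proof -
  define k where "k = n - 3"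
  have k: "n = k + 3" "2 \<le> k" using n by (auto simp: k_def)
  have e1: "n - 2 = k + 1" "n - 3 = k" using k by auto
  have cs: "fps_const (c (n-2)) = of_int (S (n-2))" "fps_const (c (n-3)) = of_int (S (n-3))"
    using c_S n by auto
  have cs': "fps_const (c (Suc k)) = of_int (S (Suc k))" "fps_const (c k) = of_int (S k)"
    using cs e1 by simp_all
  have "w * R n = fps_X^(n-2) * ((1 - w) * P n)"
    unfolding R_def one_minus_w k e1 by (simp add: power_add algebra_simps eval_nat_numeral)
  also have "\<dots> = fps_X^(n-2) * (- (of_int (S (n-2)) - w * P (n-2)) - of_int (S (n-3)) * (1 - w ^ (n-3)))"
    using P_rec[OF n] by simp
  also have "\<dots> = - fps_const (c (n-2)) * fps_X^(n-2) + w * R (n-2)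
           - fps_X * (fps_const (c (n-3)) * (fps_X^(n-3) - Bx^(n-3)))"
    unfolding e1 R_def Bx_def using cs' by (simp add: power_mult_distrib algebra_simps)
  finally show ?thesis .
qed

lemma R3: "R 3 = 0" by (simp add: R_def P_def Cl_small)
lemma P4: "P 4 = -1" by (simp add: P_def Cl4 sgnc_def occ4')
lemma R4: "R 4 = -(fps_X ^ 4)" by (simp add: R_def P4)
lemma c012: "c 0 = 0" "c 1 = 0" "c 2 = 0"
  by (auto simp: c_def Gp_def S_small)

lemma tele:
  "w * (R (M+3) + R (M+4)) + w * fps_X^4 =
     - (\<Sum>m=0..M+2. fps_const (c m) * fps_X^m)
     - fps_X * (\<Sum>m=0..M+1. fps_const (c m) * (fps_X^m - Bx^m))"
proof (induction M)
  case 0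
  have a: "(\<Sum>m=0..0+2. fps_const (c m) * fps_X^m) = 0"
    by (rule sum.neutral) (auto simp: c_def Gp_def S_small)
  have b: "(\<Sum>m=0..0+1. fps_const (c m) * (fps_X^m - Bx^m)) = 0"
    by (rule sum.neutral) (auto simp: c_def Gp_def S_small)
  show ?case unfolding a b by (simp add: R3 R4)
next
  case (Suc M)
  have r: "w * R (M+5) = - fps_const (c (M+3)) * fps_X^(M+3) + w * R (M+3)
           - fps_X * (fps_const (c (M+2)) * (fps_X^(M+2) - Bx^(M+2)))"
  proof -
    have e: "M + 5 - 2 = M + 3" "M + 5 - 3 = M + 2" by simp_all
    show ?thesis using R_rec[of "M+5", unfolded e] by simp
  qed
  have "w * (R (Suc M+3) + R (Suc M+4)) + w * fps_X^4
      = (w * (R (M+3) + R (M+4)) + w * fps_X^4) + (w * R (M+5) - w * R (M+3))"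
    by (simp add: algebra_simps)
  also have "\<dots> = - (\<Sum>m=0..M+2. fps_const (c m) * fps_X^m)
     - fps_X * (\<Sum>m=0..M+1. fps_const (c m) * (fps_X^m - Bx^m))
     + (- fps_const (c (M+3)) * fps_X^(M+3) - fps_X * (fps_const (c (M+2)) * (fps_X^(M+2) - Bx^(M+2))))"
    unfolding Suc.IH r by simp
  also have "\<dots> = - (\<Sum>m=0..Suc M+2. fps_const (c m) * fps_X^m)
     - fps_X * (\<Sum>m=0..Suc M+1. fps_const (c m) * (fps_X^m - Bx^m))"
  proof -
    have s1: "(\<Sum>m=0..Suc M+2. fps_const (c m) * fps_X^m) = (\<Sum>m=0..M+2. fps_const (c m) * fps_X^m) + fps_const (c (M+3)) * fps_X^(M+3)"
      by (simp add: sum.atLeast0_atMost_Suc eval_nat_numeral)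
    have s2: "(\<Sum>m=0..Suc M+1. fps_const (c m) * (fps_X^m - Bx^m)) = (\<Sum>m=0..M+1. fps_const (c m) * (fps_X^m - Bx^m)) + fps_const (c (M+2)) * (fps_X^(M+2) - Bx^(M+2))"
      by (simp add: sum.atLeast0_atMost_Suc eval_nat_numeral)
    show ?thesis unfolding s1 s2 by (simp add: algebra_simps flip: fps_const_neg)
  qed
  finally show ?case .
qed

lemma mult_nth_zero:
  fixes f g :: "'a::{comm_monoid_add,mult_zero} fps"
  assumes "\<forall>i<N. g $ i = 0" "k < N"
  shows "(f * g) $ k = 0"
  using assms by (auto simp: fps_mult_nth intro!: sum.neutral)

lemma R_low: "i < n \<Longrightarrow> R n $ i = 0"
  by (simp add: R_def fps_X_power_mult_nth)

lemma Bx_pow_low: "j < m \<Longrightarrow> (Bx ^ m) $ j = 0"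
  by (simp add: Bx_def power_mult_distrib fps_X_power_mult_nth)

lemma trunc_B:
  assumes "j \<le> N"
  shows "(\<Sum>m=0..N. fps_const (c m) * Bx^m) $ j = (Gp oo Bx) $ j"
proof -
  have "(\<Sum>m=0..N. fps_const (c m) * Bx^m) $ j = (\<Sum>m=0..N. c m * (Bx^m $ j))"
    by (simp add: fps_sum_nth)
  also have "\<dots> = (\<Sum>m=0..j. c m * (Bx^m $ j))"
    by (rule sum.mono_neutral_right) (use assms Bx_pow_low in auto)
  also have "\<dots> = (Gp oo Bx) $ j" by (simp add: fps_compose_nth c_def)
  finally show ?thesis .
qed

lemma func_eq: "w * fps_X^4 = - (1 + fps_X) * Gp + fps_X * (Gp oo Bx)"
proof (rule fps_ext)
  fix k
  define M :: nat where "M = k + 1"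
  define T1 where "T1 = (\<Sum>m=0..M+2. fps_const (c m) * fps_X^m)"
  define T2 where "T2 = (\<Sum>m=0..M+1. fps_const (c m) * fps_X^m)"
  define T3 where "T3 = (\<Sum>m=0..M+1. fps_const (c m) * Bx^m)"
  have t: "w * (R (M+3) + R (M+4)) + w * fps_X^4 = - T1 - fps_X * (T2 - T3)"
    using tele[of M] unfolding T1_def T2_def T3_def
    by (simp add: sum_subtractf right_diff_distrib)
  have z: "(w * (R (M+3) + R (M+4))) $ k = 0"
  proof -
    have "\<forall>i<M+3. (R (M+3) + R (M+4)) $ i = 0" using R_low by simp
    then show ?thesis by (rule mult_nth_zero) (simp add: M_def)
  qed
  have t1: "T1 $ k = Gp $ k" unfolding T1_def c_def fps_sum_rep_nth by (simp add: M_def)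
  have t2': "T2 $ (k-1) = Gp $ (k-1)" unfolding T2_def c_def fps_sum_rep_nth by (simp add: M_def)
  have t2: "(fps_X * T2) $ k = (fps_X * Gp) $ k" using t2' by simp
  have t3: "(fps_X * T3) $ k = (fps_X * (Gp oo Bx)) $ k"
  proof -
    have "T3 $ (k-1) = (Gp oo Bx) $ (k-1)" unfolding T3_def by (rule trunc_B) (simp add: M_def)
    then show ?thesis by simp
  qed
  have "(w * fps_X^4) $ k = (- T1 - fps_X * (T2 - T3)) $ k"
    using arg_cong[OF t, of "\<lambda>f. f $ k"] z by simp
  also have "\<dots> = - (T1 $ k) - (fps_X * T2) $ k + (fps_X * T3) $ k"
    by (simp add: right_diff_distrib)
  also have "\<dots> = (- (1 + fps_X) * Gp + fps_X * (Gp oo Bx)) $ k"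
    unfolding t1 t2 t3 by (simp add: algebra_simps)
  finally show "(w * fps_X^4) $ k = (- (1 + fps_X) * Gp + fps_X * (Gp oo Bx)) $ k" .
qed




definition U :: "rat fps" where "U = fps_X + Gp"

lemma T_eq: "T_clust - 1 = U"
proof (rule fps_ext)
  fix n
  show "(T_clust - 1) $ n = U $ n"
  proof (cases "n < 4")
    case True
    then have "n = 0 \<or> n = 1 \<or> n = 2 \<or> n = 3" by arith
    moreover have "t_clust 1 = 1" by (simp add: t_clust_def s_clust_def)
    moreover have "t_clust 2 = 0" "t_clust 3 = 0" by (simp_all add: t_clust_def s_clust_def)
    ultimately show ?thesis
      by (auto simp: T_clust_def U_def Gp_def S_small fps_X_def)
  next
    case False
    then show ?thesis by (simp add: T_clust_def U_def Gp_def t_S fps_X_def)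
  qed
qed

lemma Bx0: "Bx $ 0 = 0" by (simp add: Bx_def)

lemma U_fe: "U * (1 + fps_X) = fps_X * (1 + (U oo Bx))"
proof -
  have "U oo Bx = Bx + (Gp oo Bx)"
    unfolding U_def by (simp add: fps_compose_add_distrib Bx0)
  moreover have "fps_X * Bx + w * fps_X^4 = fps_X^2"
  proof -
    have "fps_X * Bx + w * fps_X^4 = fps_X^2 * (w * (1 + fps_X^2))"
      by (simp add: Bx_def algebra_simps eval_nat_numeral)
    then show ?thesis using w_eq by simp
  qed
  moreover have "fps_X * (Gp oo Bx) = w * fps_X^4 + (1 + fps_X) * Gp"
    unfolding func_eq by (simp add: algebra_simps)
  ultimately have "fps_X * (1 + (U oo Bx)) = fps_X + fps_X^2 + (1 + fps_X) * Gp"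
    by (simp add: algebra_simps)
  then show ?thesis unfolding U_def by (simp add: algebra_simps eval_nat_numeral)
qed

definition Bb :: "rat fps" where "Bb = fps_X * inverse (1 + fps_X)"

lemma U_fe2: "U = Bb * (1 + (U oo Bx))"
proof -
  have i: "(1 + fps_X) * inverse (1 + fps_X :: rat fps) = 1"
    by (rule inverse_mult_eq_1') simp
  have "U = U * ((1 + fps_X) * inverse (1 + fps_X))" using i by simp
  also have "\<dots> = (U * (1 + fps_X)) * inverse (1 + fps_X)" by (simp add: mult.assoc)
  also have "\<dots> = Bb * (1 + (U oo Bx))" unfolding U_fe Bb_def by (simp add: algebra_simps)
  finally show ?thesis .
qed

lemma divu: "(f :: rat fps) $ 0 = 0 \<Longrightarrow> f / (1 + f^2) = f * inverse (1 + f^2)"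
  by (rule fps_divide_unit) (simp add: power2_eq_square)

lemma Bj0: "Bj j $ 0 = 0"
  by (induction j) (simp_all add: Bfun_def divu)

definition b :: "nat \<Rightarrow> rat fps" where "b j = Bj j / (1 + Bj j)"

lemma b_eq: "b j = Bj j * inverse (1 + Bj j)"
  unfolding b_def by (rule fps_divide_unit) (simp add: Bj0)

lemma b0: "b j $ 0 = 0" by (simp add: b_eq Bj0)

lemma Bx_comp: "Bx oo Bj j = Bj (Suc j)"
proof -
  have "Bx oo Bj j = Bj j * inverse ((1 + fps_X^2) oo Bj j)"
    unfolding Bx_def w_def
    by (simp add: fps_compose_mult_distrib Bj0 fps_inverse_compose)
  also have "(1 + fps_X^2) oo Bj j = 1 + Bj j ^ 2"
    by (simp add: fps_compose_add_distrib fps_compose_power[symmetric] Bj0)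
  finally show ?thesis by (simp add: Bfun_def divu Bj0)
qed

lemma Bb_comp: "Bb oo Bj j = b j"
proof -
  have "Bb oo Bj j = Bj j * inverse ((1 + fps_X) oo Bj j)"
    unfolding Bb_def
    by (simp add: fps_compose_mult_distrib Bj0 fps_inverse_compose)
  also have "(1 + fps_X) oo Bj j = 1 + Bj j"
    by (simp add: fps_compose_add_distrib Bj0)
  finally show ?thesis by (simp add: b_eq)
qed

lemma U_comp: "U oo Bj j = b j * (1 + (U oo Bj (Suc j)))"
proof -
  have "U oo Bj j = (Bb * (1 + (U oo Bx))) oo Bj j" using U_fe2 by simp
  also have "\<dots> = (Bb oo Bj j) * (1 + ((U oo Bx) oo Bj j))"
    by (simp add: fps_compose_mult_distrib fps_compose_add_distrib Bj0)
  also have "(U oo Bx) oo Bj j = U oo (Bx oo Bj j)"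
    by (rule fps_compose_assoc[symmetric]) (simp_all add: Bj0 Bx0)
  finally show ?thesis by (simp add: Bb_comp Bx_comp)
qed

lemma partial: "U = (\<Sum>n<N. \<Prod>j\<le>n. b j) + (\<Prod>j<N. b j) * (U oo Bj N)"
proof (induction N)
  case 0
  then show ?case by simp
next
  case (Suc N)
  define Q where "Q = (\<Prod>j<N. b j)"
  have q1: "(\<Prod>j\<le>N. b j) = Q * b N" unfolding Q_def lessThan_Suc_atMost[symmetric] by simp
  have q2: "(\<Prod>j<Suc N. b j) = Q * b N" unfolding Q_def by simp
  have q3: "(\<Sum>n<Suc N. \<Prod>j\<le>n. b j) = (\<Sum>n<N. \<Prod>j\<le>n. b j) + Q * b N" using q1 by simp
  have uc: "U oo Bj N = b N * (1 + (U oo Bj (Suc N)))" by (rule U_comp)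
  have "Q * (U oo Bj N) = Q * b N + Q * b N * (U oo Bj (Suc N))"
    unfolding uc by (simp add: distrib_left mult.assoc)
  then show ?case using Suc.IH unfolding q2 q3 Q_def[symmetric] by (simp add: add.assoc)
qed

lemma mult_low:
  fixes f g :: "rat fps"
  assumes "\<forall>i<a1. f $ i = 0" "\<forall>i<a2. g $ i = 0" "k < a1 + a2"
  shows "(f * g) $ k = 0"
  unfolding fps_mult_nth
proof (rule sum.neutral, intro ballI)
  fix i assume "i \<in> {0..k}"
  then show "f $ i * g $ (k - i) = 0" using assms by (cases "i < a1") auto
qed

lemma prod_low: "\<forall>i<N. (\<Prod>j<N. b j) $ i = 0"
proof (induction N)
  case 0 then show ?case by simp
next
  case (Suc N)
  have h1: "\<forall>i<1. b N $ i = 0" using b0 by simp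
  show ?case using mult_low[OF Suc.IH h1] by simp
qed

lemma E_low: "i < N \<Longrightarrow> ((\<Prod>j<N. b j) * (U oo Bj N)) $ i = 0"
  using mult_low[OF prod_low, of 0 "U oo Bj N" i N] by simp

theorem theorem2p4:
  shows "(\<lambda>n. \<Prod>j\<le>n. Bj j / (1 + Bj j)) sums (T_clust - 1)"
proof -
  define E where "E N = (\<Prod>j<N. b j) * (U oo Bj N)" for N
  have ps: "(\<Sum>n<N. \<Prod>j\<le>n. Bj j / (1 + Bj j)) = U - E N" for N
    using partial[of N] unfolding E_def b_def by (simp add: algebra_simps)
  have "(\<lambda>N. U - E N) \<longlonglongrightarrow> U"
    unfolding lim_sequentially
  proof (intro allI impI)
    fix r :: real assume r: "r > 0"
    obtain n0 where n0: "(1/2)^n0 < r" using reals_power_lt_ex[OF r, of 2] by auto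
    have "dist (U - E n) U < r" if "n \<ge> n0" for n
    proof (cases "E n = 0")
      case True then show ?thesis using r by simp
    next
      case False
      have "subdegree (E n) \<ge> n" using False E_low unfolding E_def by (intro subdegree_geI) auto
      have d: "dist (U - E n) U = inverse (2 ^ subdegree (E n))" using False by (simp add: dist_fps_def)
      have "inverse (2 ^ subdegree (E n)) \<le> inverse (2 ^ n :: real)"
        by (rule le_imp_inverse_le) (use \<open>subdegree (E n) \<ge> n\<close> in \<open>simp_all add: power_increasing\<close>)
      then have "dist (U - E n) U \<le> (1/2)^n" unfolding d by (simp add: power_one_over inverse_eq_divide)
      also have "(1/2::real)^n \<le> (1/2)^n0" using that by (simp add: power_decreasing)
      finally show ?thesis using n0 by simp
    qed
    then show "\<exists>no. \<forall>n\<ge>no. dist (U - E n) U < r" by blast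
  qed
  then show ?thesis unfolding sums_def ps T_eq .
qed


end
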